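(* Let $\mathcal{A}$ be a set of $N$ arms and let $1\le B\le N$. Consider any deterministic algorithm which, in each round $t=1,\dots,T$, chooses a subset $S_t\subset\mathcal{A}$ with $|S_t|=B$ as a function of the previously revealed cost functions $c_1,\dots,c_{t-1}$ (full feedback). Then its worst-case regret satisfies \[R_T^*\ \ge\ \left(1-\frac{B}{N}\right)T.\]
   Context: In each round $t\in[T]$ an (oblivious) adversary fixes a cost function $c_t:\mathcal{A}\to[0,1]$; the algorithm picks $S_t\subset\mathcal{A}$, $|S_t|=B$, and incurs cost $c_t(S_t):=\min_{a\in S_t}c_t(a)$; in the full feedback setting the whole function $c_t$ is then revealed. For an algorithm $\mathbf{ALG}$ the worst-case expected regret is $R_T^*(\mathbf{ALG}):=\max_{c_1,\dots,c_T}\mathbb{E}\left[\sum_{t=1}^T c_t(S_t)-\min_{a^*\in\mathcal{A}}\sum_{t=1}^T c_t(a^* )\right]$, the expectation being over the algorithm's randomness. *)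

theory Defs
  imports Complex_Main
begin

text \<open>Rounds are indexed 0,...,T-1. A cost sequence is c :: nat => 'a => real,
  c t being the cost function of round t. A deterministic full-feedback algorithm
  is a map from the history of revealed cost functions (list, oldest first)
  to the chosen subset.\<close>

definition valid_costs :: "'a set \<Rightarrow> (nat \<Rightarrow> 'a \<Rightarrow> real) \<Rightarrow> bool" where
  "valid_costs A c \<longleftrightarrow> (\<forall>t. \<forall>a\<in>A. 0 \<le> c t a \<and> c t a \<le> 1)"

definition set_cost :: "('a \<Rightarrow> real) \<Rightarrow> 'a set \<Rightarrow> real" where
  "set_cost f S = Min (f ` S)"

definition chosen :: "(('a \<Rightarrow> real) list \<Rightarrow> 'a set) \<Rightarrow> (nat \<Rightarrow> 'a \<Rightarrow> real) \<Rightarrow> nat \<Rightarrow> 'a set" where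
  "chosen alg c t = alg (map c [0..<t])"

definition regret ::
  "'a set \<Rightarrow> (('a \<Rightarrow> real) list \<Rightarrow> 'a set) \<Rightarrow> nat \<Rightarrow> (nat \<Rightarrow> 'a \<Rightarrow> real) \<Rightarrow> real" where
  "regret A alg T c =
     (\<Sum>t<T. set_cost (c t) (chosen alg c t)) - Min ((\<lambda>a. \<Sum>t<T. c t a) ` A)"

text \<open>Worst-case (expected) regret of a deterministic algorithm: the expectation
  is trivial, so it is the supremum of the regret over admissible cost sequences.\<close>
definition worst_case_regret ::
  "'a set \<Rightarrow> (('a \<Rightarrow> real) list \<Rightarrow> 'a set) \<Rightarrow> nat \<Rightarrow> real" where
  "worst_case_regret A alg T = Sup {regret A alg T c | c. valid_costs A c}"

end

theory Submission
  imports Defs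
begin

primrec advhist :: "(('a \<Rightarrow> real) list \<Rightarrow> 'a set) \<Rightarrow> nat \<Rightarrow> ('a \<Rightarrow> real) list" where
  "advhist alg 0 = []"
| "advhist alg (Suc n) = advhist alg n @ [(\<lambda>a. if a \<in> alg (advhist alg n) then 1 else 0)]"

definition advc :: "(('a \<Rightarrow> real) list \<Rightarrow> 'a set) \<Rightarrow> nat \<Rightarrow> 'a \<Rightarrow> real" where
  "advc alg t = last (advhist alg (Suc t))"

lemma advc_eq: "advc alg t = (\<lambda>a. if a \<in> alg (advhist alg t) then 1 else 0)"
  by (simp add: advc_def)

lemma map_advc: "map (advc alg) [0..<t] = advhist alg t"
  by (induction t) (simp_all add: advc_eq)

lemma advhist_valid: "\<forall>f\<in>set (advhist alg t). \<forall>a\<in>A. 0 \<le> f a \<and> f a \<le> (1::real)"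
  by (induction t) auto

theorem proposition1:
  fixes A :: "'a set" and N B T :: nat
    and alg :: "('a \<Rightarrow> real) list \<Rightarrow> 'a set"
  assumes "finite A" and "card A = N" and "1 \<le> B" and "B \<le> N"
    and "\<And>h. (\<forall>f\<in>set h. \<forall>a\<in>A. 0 \<le> f a \<and> f a \<le> 1) \<Longrightarrow> alg h \<subseteq> A \<and> card (alg h) = B"
  shows "worst_case_regret A alg T \<ge> (1 - real B / real N) * real T"
proof -
  note fin = assms(1)
  have Ane: "A \<noteq> {}" using assms(2,3,4) by auto
  have Npos: "N > 0" using assms(3,4) by auto
  define c where "c = advc alg"
  have ch: "chosen alg c t = alg (advhist alg t)" for t
    by (simp add: chosen_def c_def map_advc)
  have S: "alg (advhist alg t) \<subseteq> A \<and> card (alg (advhist alg t)) = B" for t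
    using assms(5) advhist_valid by blast
  have vc: "valid_costs A c"
    by (simp add: valid_costs_def c_def advc_eq)
  have bound: "regret A alg T c' \<le> real T" if "valid_costs A c'" for c'
  proof -
    have cs: "chosen alg c' t \<subseteq> A \<and> card (chosen alg c' t) = B" for t
      unfolding chosen_def using assms(5) that by (auto simp: valid_costs_def)
    have "set_cost (c' t) (chosen alg c' t) \<le> 1" for t
    proof -
      from cs[of t] assms(3) have ne: "chosen alg c' t \<noteq> {}" and fs: "finite (chosen alg c' t)"
        by (auto intro: card_ge_0_finite)
      then obtain a where a: "a \<in> chosen alg c' t" by auto
      have "Min (c' t ` chosen alg c' t) \<le> c' t a" using fs a by auto
      also have "\<dots> \<le> 1" using a cs[of t] that by (auto simp: valid_costs_def)
      finally show ?thesis by (simp add: set_cost_def)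
    qed
    hence "(\<Sum>t<T. set_cost (c' t) (chosen alg c' t)) \<le> (\<Sum>t<T. 1)"
      by (intro sum_mono) auto
    moreover have "Min ((\<lambda>a. \<Sum>t<T. c' t a) ` A) \<ge> 0"
      using fin Ane that by (auto simp: valid_costs_def intro!: sum_nonneg)
    ultimately show ?thesis by (simp add: regret_def)
  qed
  have bdd: "bdd_above {regret A alg T c | c. valid_costs A c}"
    using bound by (auto simp: bdd_above_def)
  have sc: "set_cost (c t) (chosen alg c t) = 1" for t
  proof -
    from S[of t] assms(3) have ne: "alg (advhist alg t) \<noteq> {}" by auto
    have "c t ` alg (advhist alg t) = {1}" using ne by (auto simp: c_def advc_eq)
    thus ?thesis by (simp add: set_cost_def ch)
  qed
  have sumA: "(\<Sum>a\<in>A. \<Sum>t<T. c t a) = real T * real B"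
  proof -
    have "(\<Sum>a\<in>A. \<Sum>t<T. c t a) = (\<Sum>t<T. \<Sum>a\<in>A. c t a)" by (rule sum.swap)
    also have "\<dots> = (\<Sum>t<T. real B)"
    proof (rule sum.cong)
      fix t
      have "(\<Sum>a\<in>A. c t a) = (\<Sum>a\<in>A. if a \<in> alg (advhist alg t) then 1 else 0)"
        by (simp add: c_def advc_eq)
      also have "\<dots> = real (card (A \<inter> alg (advhist alg t)))"
        using fin by (simp add: sum.If_cases)
      also have "A \<inter> alg (advhist alg t) = alg (advhist alg t)" using S[of t] by auto
      finally show "(\<Sum>a\<in>A. c t a) = real B" using S[of t] by simp
    qed simp
    finally show ?thesis by simp
  qed
  have minle: "Min ((\<lambda>a. \<Sum>t<T. c t a) ` A) * real N \<le> real T * real B"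
  proof -
    let ?m = "Min ((\<lambda>a. \<Sum>t<T. c t a) ` A)"
    have "(\<Sum>a\<in>A. ?m) \<le> (\<Sum>a\<in>A. \<Sum>t<T. c t a)"
      using fin by (intro sum_mono) auto
    thus ?thesis using sumA assms(2) by (simp add: mult.commute)
  qed
  have "regret A alg T c \<ge> (1 - real B / real N) * real T"
  proof -
    have "Min ((\<lambda>a. \<Sum>t<T. c t a) ` A) \<le> real T * real B / real N"
      using minle Npos by (simp add: field_simps)
    moreover have "(1 - real B / real N) * real T = real T - real T * real B / real N"
      by (simp add: algebra_simps)
    ultimately show ?thesis by (simp add: regret_def sc)
  qed
  also have "regret A alg T c \<le> worst_case_regret A alg T"
    unfolding worst_case_regret_def using vc bdd by (intro cSup_upper) auto
  finally show ?thesis .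
qed

end
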